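(* Let $u\geq 1$ and $r\geq 2$ be integers. For every non-negative integer $n$, $\alpha_u^{(r)}(n)=\beta_u^{(r)}(n)$.
   Context: A partition of $n$ is a non-increasing finite sequence of positive integers (parts) summing to $n$. $\mathcal O(n;r,1)$ denotes the set of partitions of $n$ in which exactly one distinct part value is divisible by $r$ (this part may be repeated). $\mathcal O_u(n;r,1)$ is the set of $\lambda\in\mathcal O(n;r,1)$ such that the unique part value divisible by $r$ occurs exactly $u$ times. $\mathcal D(n;r,1)$ denotes the set of partitions of $n$ in which exactly one part value occurs at least $r$ times. $\mathcal D_u(n;r,1)$ is the set of $\lambda\in\mathcal D(n;r,1)$ such that the unique part value occurring at least $r$ times equals $u$. Set $\alpha_u^{(r)}(n)=|\mathcal O_u(n;r,1)|$ and $\beta_u^{(r)}(n)=|\mathcal D_u(n;r,1)|$. *)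

theory Defs
  imports Main "HOL-Library.Multiset"
begin

definition partitions :: "nat \<Rightarrow> nat multiset set" where
  "partitions n = {p. (\<forall>x\<in>#p. 0 < x) \<and> sum_mset p = n}"

definition O_set :: "nat \<Rightarrow> nat \<Rightarrow> nat \<Rightarrow> nat multiset set" where
  "O_set u r n = {p \<in> partitions n.
      \<exists>v. {x \<in> set_mset p. r dvd x} = {v} \<and> count p v = u}"

definition D_set :: "nat \<Rightarrow> nat \<Rightarrow> nat \<Rightarrow> nat multiset set" where
  "D_set u r n = {p \<in> partitions n. {x \<in> set_mset p. r \<le> count p x} = {u}}"

definition alpha :: "nat \<Rightarrow> nat \<Rightarrow> nat \<Rightarrow> nat" where
  "alpha u r n = card (O_set u r n)"

definition beta :: "nat \<Rightarrow> nat \<Rightarrow> nat \<Rightarrow> nat" where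
  "beta u r n = card (D_set u r n)"

end

theory Submission
  imports Defs
begin

lemma size_le_sum_pos:
  "(\<forall>x\<in>#p. 0 < (x::nat)) \<Longrightarrow> size p \<le> sum_mset p"
proof (induction p)
  case empty then show ?case by simp
next
  case (add x p) then show ?case by auto
qed

lemma finite_partitions: "finite (partitions n)"
proof -
  have "partitions n \<subseteq> (\<Union>m\<in>{..n}. multisets_of_size {1..n} m)"
  proof
    fix p assume p: "p \<in> partitions n"
    then have pos: "\<forall>x\<in>#p. 0 < x" and s: "sum_mset p = n" by (auto simp: partitions_def)
    have "size p \<le> n" using size_le_sum_pos[OF pos] s by simp
    moreover have "set_mset p \<subseteq> {1..n}"
    proof
      fix x assume x: "x \<in># p"
      then obtain p' where "p = add_mset x p'" by (metis multi_member_split)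
      then have "x \<le> sum_mset p" by simp
      then show "x \<in> {1..n}" using pos x s by auto
    qed
    ultimately show "p \<in> (\<Union>m\<in>{..n}. multisets_of_size {1..n} m)"
      by (auto simp: multisets_of_size_def)
  qed
  then show ?thesis by (rule finite_subset) auto
qed

lemma partitions_0: "partitions 0 = {{#}}"
  unfolding partitions_def
proof (rule set_eqI, rule iffI)
  fix p :: "nat multiset" assume "p \<in> {p. (\<forall>x\<in>#p. 0 < x) \<and> sum_mset p = 0}"
  then have "\<forall>x\<in>#p. 0 < x" "sum_mset p = 0" by auto
  then show "p \<in> {{#}}" by (metis multiset_nonemptyE sum_mset_0_iff gr_implies_not0 singletonI)
qed auto

definition NoDiv :: "nat \<Rightarrow> nat \<Rightarrow> nat multiset set" where
  "NoDiv r m = {p \<in> partitions m. \<forall>x\<in>#p. \<not> r dvd x}"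

definition LessR :: "nat \<Rightarrow> nat \<Rightarrow> nat multiset set" where
  "LessR r m = {p \<in> partitions m. \<forall>x. count p x < r}"

lemma finite_NoDiv: "finite (NoDiv r m)"
  unfolding NoDiv_def using finite_partitions by auto

lemma finite_LessR: "finite (LessR r m)"
  unfolding LessR_def using finite_partitions by auto

lemma sum_repeat: "sum_mset (repeat_mset r q) = r * sum_mset (q::nat multiset)"
  by (induction r) auto

lemma finite_J: "0 < (r::nat) \<Longrightarrow> finite {j. r*j \<le> n}"
proof (rule finite_subset[of _ "{..n}"])
  assume r: "0 < r"
  show "{j. r * j \<le> n} \<subseteq> {..n}"
  proof
    fix j assume "j \<in> {j. r * j \<le> n}"
    moreover have "j \<le> r*j" using r by (cases r) auto
    ultimately show "j \<in> {..n}" by (metis mem_Collect_eq le_trans atMost_iff)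
  qed
qed auto

lemma filter_nodiv:
  assumes "\<forall>x\<in>#a. \<not> (r::nat) dvd x"
  shows "filter_mset (\<lambda>x. r dvd x) (a + image_mset ((*) r) q) = image_mset ((*) r) q"
    and "filter_mset (\<lambda>x. \<not> r dvd x) (a + image_mset ((*) r) q) = a"
  using assms by (auto simp: filter_mset_image_mset intro!: filter_mset_eq_conv[THEN iffD2])

lemma sum_image_mult: "sum_mset (image_mset ((*) r) q) = r * sum_mset (q::nat multiset)"
  by (induction q) (auto simp: algebra_simps)

lemma decomp1:
  assumes r: "0 < (r::nat)"
  shows "card (partitions n) = (\<Sum>j\<in>{j. r*j \<le> n}. card (NoDiv r (n - r*j)) * card (partitions j))"
proof -
  let ?J = "{j. r*j \<le> n}"
  let ?S = "SIGMA j:?J. NoDiv r (n - r*j) \<times> partitions j"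
  let ?f = "\<lambda>(j::nat,a,q). a + image_mset ((*) r) q"
  have inv: "image_mset (\<lambda>x. x div r) (image_mset ((*) r) q) = q" for q
    using r by (simp add: image_mset.compositionality o_def)
  have "inj_on ?f ?S"
  proof (rule inj_onI)
    fix x y assume x: "x \<in> ?S" and y: "y \<in> ?S" and e: "?f x = ?f y"
    obtain j a q where xe: "x = (j, a, q)" by (cases x) auto
    obtain j' a' q' where ye: "y = (j', a', q')" by (cases y) auto
    have A: "(j, a, q) \<in> ?S" "(j', a', q') \<in> ?S" using x y xe ye by auto
    have eq: "a + image_mset ((*) r) q = a' + image_mset ((*) r) q'" using e xe ye by simp
    have na: "\<forall>x\<in>#a. \<not> r dvd x" "\<forall>x\<in>#a'. \<not> r dvd x" using A by (auto simp: NoDiv_def)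
    have "image_mset ((*) r) q = image_mset ((*) r) q'"
      using filter_nodiv(1)[OF na(1), of q] filter_nodiv(1)[OF na(2), of q'] eq by simp
    then have qq: "q = q'" using inv by metis
    moreover have "a = a'"
      using filter_nodiv(2)[OF na(1), of q] filter_nodiv(2)[OF na(2), of q'] eq by simp
    moreover have "j = j'" using A qq by (auto simp: partitions_def)
    ultimately show "x = y" using xe ye by simp
  qed
  moreover have "?f ` ?S = partitions n"
  proof
    show "?f ` ?S \<subseteq> partitions n"
    proof
      fix p assume "p \<in> ?f ` ?S"
      then obtain j a q where A: "(j, a, q) \<in> ?S" and pe: "p = a + image_mset ((*) r) q" by auto
      from A have "\<forall>x\<in>#a. 0 < x" "sum_mset a = n - r*j" "\<forall>x\<in>#q. 0 < x" "sum_mset q = j" "r*j \<le> n"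
        by (auto simp: NoDiv_def partitions_def)
      moreover have "sum_mset (image_mset ((*) r) q) = r * sum_mset q"
        by (rule sum_image_mult)
      ultimately show "p \<in> partitions n"
        using r pe by (auto simp: partitions_def)
    qed
  next
    show "partitions n \<subseteq> ?f ` ?S"
    proof
      fix p assume p: "p \<in> partitions n"
      define a where "a = filter_mset (\<lambda>x. \<not> r dvd x) p"
      define q where "q = image_mset (\<lambda>x. x div r) (filter_mset (\<lambda>x. r dvd x) p)"
      have iq: "image_mset ((*) r) q = filter_mset (\<lambda>x. r dvd x) p"
      proof -
        have "image_mset (\<lambda>x. r * (x div r)) (filter_mset (\<lambda>x. r dvd x) p)
              = image_mset (\<lambda>x. x) (filter_mset (\<lambda>x. r dvd x) p)"
          by (rule image_mset_cong) auto
        then show ?thesis unfolding q_def image_mset.compositionality o_def by simp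
      qed
      have pa: "p = a + image_mset ((*) r) q" unfolding iq a_def by (simp add: add.commute)
      have sq: "sum_mset (image_mset ((*) r) q) = r * sum_mset q"
        by (rule sum_image_mult)
      have pos: "\<forall>x\<in>#p. 0 < x" "sum_mset p = n" using p by (auto simp: partitions_def)
      have qpos: "\<forall>x\<in>#q. 0 < x" using pos(1) r unfolding q_def
        by (auto, metis dvd_div_eq_0_iff gr0I)
      have "sum_mset a + r * sum_mset q = n" using pos(2) pa sq by (metis sum_mset.union)
      then have "(sum_mset q, a, q) \<in> ?S"
        using pos qpos by (auto simp: NoDiv_def partitions_def a_def)
      then show "p \<in> ?f ` ?S" using pa by force
    qed
  qed
  ultimately have "bij_betw ?f ?S (partitions n)" by (rule bij_betw_imageI)
  then have "card (partitions n) = card ?S" by (simp add: bij_betw_same_card)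
  also have "\<dots> = (\<Sum>j\<in>?J. card (NoDiv r (n - r*j) \<times> partitions j))"
    using finite_J[OF r] finite_NoDiv finite_partitions by (simp add: card_SigmaI)
  finally show ?thesis by (simp add: card_cartesian_product)
qed


lemma decomp2:
  assumes r: "0 < (r::nat)"
  shows "card (partitions n) = (\<Sum>j\<in>{j. r*j \<le> n}. card (LessR r (n - r*j)) * card (partitions j))"
proof -
  let ?J = "{j. r*j \<le> n}"
  let ?S = "SIGMA j:?J. LessR r (n - r*j) \<times> partitions j"
  let ?f = "\<lambda>(j::nat,a,q). a + repeat_mset r q"
  have "inj_on ?f ?S"
  proof (rule inj_onI)
    fix x y assume x: "x \<in> ?S" and y: "y \<in> ?S" and e: "?f x = ?f y"
    obtain j a q where xe: "x = (j, a, q)" by (cases x) auto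
    obtain j' a' q' where ye: "y = (j', a', q')" by (cases y) auto
    have A: "(j, a, q) \<in> ?S" "(j', a', q') \<in> ?S" using x y xe ye by auto
    have eq: "a + repeat_mset r q = a' + repeat_mset r q'" using e xe ye by simp
    have la: "count a z < r" "count a' z < r" for z using A by (auto simp: LessR_def)
    have cz: "count a z + r * count q z = count a' z + r * count q' z" for z
      using arg_cong[OF eq, of "\<lambda>m. count m z"] by simp
    have qz: "count q z = count q' z" for z
    proof -
      have "(count a z + r * count q z) div r = count q z" using la(1)[of z] r by simp
      moreover have "(count a' z + r * count q' z) div r = count q' z" using la(2)[of z] r by simp
      ultimately show ?thesis using cz[of z] by simp
    qed
    have qq: "q = q'" using qz by (simp add: multiset_eq_iff)
    moreover have "a = a'" using cz qz by (simp add: multiset_eq_iff)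
    moreover have "j = j'" using A qq by (auto simp: partitions_def)
    ultimately show "x = y" using xe ye by simp
  qed
  moreover have "?f ` ?S = partitions n"
  proof
    show "?f ` ?S \<subseteq> partitions n"
    proof
      fix p assume "p \<in> ?f ` ?S"
      then obtain j a q where A: "(j, a, q) \<in> ?S" and pe: "p = a + repeat_mset r q" by auto
      from A have "\<forall>x\<in>#a. 0 < x" "sum_mset a = n - r*j" "\<forall>x\<in>#q. 0 < x" "sum_mset q = j" "r*j \<le> n"
        by (auto simp: LessR_def partitions_def)
      moreover have "\<forall>x\<in>#repeat_mset r q. x \<in># q"
        by (metis count_eq_zero_iff count_repeat_mset mult_0_right)
      ultimately show "p \<in> partitions n"
        using r pe sum_repeat[of r q] by (auto simp: partitions_def)
    qed
  next
    show "partitions n \<subseteq> ?f ` ?S"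
    proof
      fix p assume p: "p \<in> partitions n"
      define q where "q = (\<Sum>x\<in>set_mset p. replicate_mset (count p x div r) x)"
      define a where "a = p - repeat_mset r q"
      have cq: "count q y = count p y div r" for y
      proof -
        have "count q y = (\<Sum>x\<in>set_mset p. if y = x then count p x div r else 0)"
          unfolding q_def count_sum by (intro sum.cong) auto
        also have "\<dots> = (if y \<in># p then count p y div r else 0)"
          by (simp add: sum.delta)
        also have "\<dots> = count p y div r" by (auto simp: count_eq_zero_iff[symmetric])
        finally show ?thesis .
      qed
      have ca: "count a y = count p y mod r" for y
        unfolding a_def using cq[of y] by (simp add: minus_mult_div_eq_mod)
      have pa: "p = a + repeat_mset r q"
        by (simp add: multiset_eq_iff ca cq)
      have pos: "\<forall>x\<in>#p. 0 < x" "sum_mset p = n" using p by (auto simp: partitions_def)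
      have qpos: "\<forall>x\<in>#q. 0 < x"
      proof
        fix x assume "x \<in># q"
        then have "count q x > 0" by simp
        then have "x \<in># p" using cq[of x] by (metis count_eq_zero_iff div_0 less_irrefl)
        then show "0 < x" using pos by auto
      qed
      have apos: "\<forall>x\<in>#a. 0 < x" using pos(1) unfolding a_def by (meson in_diffD)
      have "sum_mset a + r * sum_mset q = n" using pos(2) pa sum_repeat[of r q] by (metis sum_mset.union)
      moreover have "count a x < r" for x using ca r by simp
      ultimately have "(sum_mset q, a, q) \<in> ?S"
        using apos qpos by (auto simp: LessR_def partitions_def)
      then show "p \<in> ?f ` ?S" using pa by force
    qed
  qed
  ultimately have "bij_betw ?f ?S (partitions n)" by (rule bij_betw_imageI)
  then have "card (partitions n) = card ?S" by (simp add: bij_betw_same_card)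
  also have "\<dots> = (\<Sum>j\<in>?J. card (LessR r (n - r*j) \<times> partitions j))"
    using finite_J[OF r] finite_LessR finite_partitions by (simp add: card_SigmaI)
  finally show ?thesis by (simp add: card_cartesian_product)
qed


lemma glaisher:
  assumes r: "0 < (r::nat)"
  shows "card (NoDiv r n) = card (LessR r n)"
proof (induction n rule: less_induct)
  case (less n)
  let ?J = "{j. r*j \<le> n}"
  have fin: "finite ?J" by (rule finite_J[OF r])
  have J: "?J = insert 0 (?J - {0})" by auto
  have rest: "(\<Sum>j\<in>?J - {0}. card (NoDiv r (n - r*j)) * card (partitions j))
      = (\<Sum>j\<in>?J - {0}. card (LessR r (n - r*j)) * card (partitions j))"
  proof (rule sum.cong[OF refl])
    fix j assume "j \<in> ?J - {0}"
    then have "0 < r*j" "r*j \<le> n" using r by auto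
    then have "n - r*j < n" by linarith
    then show "card (NoDiv r (n - r*j)) * card (partitions j) = card (LessR r (n - r*j)) * card (partitions j)"
      using less.IH by simp
  qed
  have "(\<Sum>j\<in>?J. card (NoDiv r (n - r*j)) * card (partitions j))
      = (\<Sum>j\<in>?J. card (LessR r (n - r*j)) * card (partitions j))"
    using decomp1[OF r, of n] decomp2[OF r, of n] by simp
  then have "card (NoDiv r n) * card (partitions 0) + (\<Sum>j\<in>?J - {0}. card (NoDiv r (n - r*j)) * card (partitions j))
      = card (LessR r n) * card (partitions 0) + (\<Sum>j\<in>?J - {0}. card (LessR r (n - r*j)) * card (partitions j))"
    using fin by (simp add: sum.remove[of ?J 0])
  then show ?case using rest partitions_0 by simp
qed


lemma finite_K: assumes ur: "0 < u*r" shows "finite {k::nat. 0 < k \<and> u*r*k \<le> n}"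
proof (rule finite_subset[of _ "{..n}"])
  show "{k. 0 < k \<and> u * r * k \<le> n} \<subseteq> {..n}"
  proof
    fix k assume k: "k \<in> {k. 0 < k \<and> u * r * k \<le> n}"
    have "k \<le> u*r*k" using ur by simp
    then show "k \<in> {..n}" using k by (metis mem_Collect_eq le_trans atMost_iff)
  qed
qed auto

lemma alpha_sum:
  assumes u: "1 \<le> u" and r: "0 < (r::nat)"
  shows "alpha u r n = (\<Sum>k\<in>{k. 0 < k \<and> u*r*k \<le> n}. card (NoDiv r (n - u*r*k)))"
proof -
  let ?K = "{k. 0 < k \<and> u*r*k \<le> n}"
  let ?S = "SIGMA k:?K. NoDiv r (n - u*r*k)"
  let ?g = "\<lambda>(k::nat,a). a + replicate_mset u (r*k)"
  have filt: "filter_mset (\<lambda>x. r dvd x) (a + replicate_mset u (r*k)) = replicate_mset u (r*k)"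
    "filter_mset (\<lambda>x. \<not> r dvd x) (a + replicate_mset u (r*k)) = a"
    if na: "\<forall>x\<in>#a. \<not> r dvd x" for a k
  proof -
    have z: "count a x = 0" if "r dvd x" for x using na that by (meson count_eq_zero_iff)
    show "filter_mset (\<lambda>x. r dvd x) (a + replicate_mset u (r*k)) = replicate_mset u (r*k)"
      by (rule multiset_eqI) (auto simp: z)
    show "filter_mset (\<lambda>x. \<not> r dvd x) (a + replicate_mset u (r*k)) = a"
      by (rule multiset_eqI) (auto simp: z)
  qed
  have "inj_on ?g ?S"
  proof (rule inj_onI)
    fix x y assume x: "x \<in> ?S" and y: "y \<in> ?S" and e: "?g x = ?g y"
    obtain k a where xe: "x = (k, a)" by (cases x) auto
    obtain k' a' where ye: "y = (k', a')" by (cases y) auto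
    have A: "(k, a) \<in> ?S" "(k', a') \<in> ?S" using x y xe ye by auto
    have eq: "a + replicate_mset u (r*k) = a' + replicate_mset u (r*k')" using e xe ye by simp
    have na: "\<forall>x\<in>#a. \<not> r dvd x" "\<forall>x\<in>#a'. \<not> r dvd x" using A by (auto simp: NoDiv_def)
    have "replicate_mset u (r*k) = replicate_mset u (r*k')"
      using filt(1)[OF na(1), of k] filt(1)[OF na(2), of k'] eq by simp
    then have "count (replicate_mset u (r*k)) (r*k) = count (replicate_mset u (r*k')) (r*k)" by simp
    then have "r*k = r*k'" using u by (auto split: if_splits)
    then have "k = k'" using r by simp
    moreover have "a = a'"
      using filt(2)[OF na(1), of k] filt(2)[OF na(2), of k'] eq by simp
    ultimately show "x = y" using xe ye by simp
  qed
  moreover have "?g ` ?S = O_set u r n"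
  proof
    show "?g ` ?S \<subseteq> O_set u r n"
    proof
      fix p assume "p \<in> ?g ` ?S"
      then obtain k a where A: "(k, a) \<in> ?S" and pe: "p = a + replicate_mset u (r*k)" by auto
      from A have h: "\<forall>x\<in>#a. 0 < x" "sum_mset a = n - u*r*k" "\<forall>x\<in>#a. \<not> r dvd x" "0 < k" "u*r*k \<le> n"
        by (auto simp: NoDiv_def partitions_def)
      have "p \<in> partitions n"
        using h r pe by (auto simp: partitions_def algebra_simps)
      moreover have "{x \<in> set_mset p. r dvd x} = {r*k}" using h u pe by auto
      moreover have "count p (r*k) = u" using h pe by (auto simp: count_eq_zero_iff)
      ultimately show "p \<in> O_set u r n" unfolding O_set_def by blast
    qed
  next
    show "O_set u r n \<subseteq> ?g ` ?S"
    proof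
      fix p assume p: "p \<in> O_set u r n"
      then obtain v where pp: "p \<in> partitions n" and sv: "{x \<in> set_mset p. r dvd x} = {v}"
        and cv: "count p v = u" by (auto simp: O_set_def)
      have pos: "\<forall>x\<in>#p. 0 < x" "sum_mset p = n" using pp by (auto simp: partitions_def)
      have vp: "v \<in># p" "r dvd v" using sv by auto
      then have v0: "0 < v" using pos by auto
      define k where "k = v div r"
      have vk: "v = r*k" unfolding k_def using vp by simp
      have k0: "0 < k" using v0 vk by simp
      define a where "a = filter_mset (\<lambda>x. \<not> r dvd x) p"
      have pa: "p = a + replicate_mset u (r*k)"
      proof (subst multiset_eq_iff, intro allI)
        fix x
        show "count p x = count (a + replicate_mset u (r*k)) x"
        proof (cases "r dvd x")
          case True
          then show ?thesis
          proof (cases "x = v")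
            case True then show ?thesis using cv vk vp by (simp add: a_def)
          next
            case False
            then have "x \<notin># p" using sv \<open>r dvd x\<close> by blast
            then show ?thesis using False vk \<open>r dvd x\<close> by (simp add: a_def count_eq_zero_iff)
          qed
        next
          case False then show ?thesis using vp vk by (auto simp: a_def)
        qed
      qed
      have "sum_mset a + u*r*k = n" using pos(2) pa by (simp add: algebra_simps)
      then have "(k, a) \<in> ?S" using pos k0 by (auto simp: NoDiv_def partitions_def a_def)
      then show "p \<in> ?g ` ?S" using pa by force
    qed
  qed
  ultimately have "bij_betw ?g ?S (O_set u r n)" by (rule bij_betw_imageI)
  then have "alpha u r n = card ?S" by (simp add: bij_betw_same_card alpha_def)
  also have "\<dots> = (\<Sum>k\<in>?K. card (NoDiv r (n - u*r*k)))"
    using finite_K[of u r n] u r finite_NoDiv by (simp add: card_SigmaI)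
  finally show ?thesis .
qed


lemma beta_sum:
  assumes u: "1 \<le> u" and r: "0 < (r::nat)"
  shows "beta u r n = (\<Sum>k\<in>{k. 0 < k \<and> u*r*k \<le> n}. card (LessR r (n - u*r*k)))"
proof -
  let ?K = "{k. 0 < k \<and> u*r*k \<le> n}"
  let ?S = "SIGMA k:?K. LessR r (n - u*r*k)"
  let ?g = "\<lambda>(k::nat,a). a + replicate_mset (r*k) u"
  have "inj_on ?g ?S"
  proof (rule inj_onI)
    fix x y assume x: "x \<in> ?S" and y: "y \<in> ?S" and e: "?g x = ?g y"
    obtain k a where xe: "x = (k, a)" by (cases x) auto
    obtain k' a' where ye: "y = (k', a')" by (cases y) auto
    have A: "(k, a) \<in> ?S" "(k', a') \<in> ?S" using x y xe ye by auto
    have eq: "a + replicate_mset (r*k) u = a' + replicate_mset (r*k') u" using e xe ye by simp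
    have la: "count a u < r" "count a' u < r" using A by (auto simp: LessR_def)
    have cu: "count a u + r*k = count a' u + r*k'"
      using arg_cong[OF eq, of "\<lambda>m. count m u"] by simp
    have "(count a u + r*k) div r = k" using la(1) r by simp
    moreover have "(count a' u + r*k') div r = k'" using la(2) r by simp
    ultimately have kk: "k = k'" using cu by simp
    moreover have "a = a'" using eq kk by simp
    ultimately show "x = y" using xe ye by simp
  qed
  moreover have "?g ` ?S = D_set u r n"
  proof
    show "?g ` ?S \<subseteq> D_set u r n"
    proof
      fix p assume "p \<in> ?g ` ?S"
      then obtain k a where A: "(k, a) \<in> ?S" and pe: "p = a + replicate_mset (r*k) u" by auto
      from A have h: "\<forall>x\<in>#a. 0 < x" "sum_mset a = n - u*r*k" "\<forall>x. count a x < r" "0 < k" "u*r*k \<le> n"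
        by (auto simp: LessR_def partitions_def)
      have "p \<in> partitions n"
        using h u pe by (auto simp: partitions_def algebra_simps)
      moreover have "{x \<in> set_mset p. r \<le> count p x} = {u}"
      proof
        show "{x \<in> set_mset p. r \<le> count p x} \<subseteq> {u}"
        proof
          fix x assume "x \<in> {x \<in> set_mset p. r \<le> count p x}"
          then have "r \<le> count p x" by simp
          then show "x \<in> {u}" using h(3) pe by (cases "x = u") (auto simp: not_le[symmetric])
        qed
      next
        have "r \<le> r*k" using h(4) by simp
        then show "{u} \<subseteq> {x \<in> set_mset p. r \<le> count p x}" using pe h(4) r by (auto intro: trans_le_add2)
      qed
      ultimately show "p \<in> D_set u r n" unfolding D_set_def by blast
    qed
  next
    show "D_set u r n \<subseteq> ?g ` ?S"
    proof
      fix p assume p: "p \<in> D_set u r n"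
      then have pp: "p \<in> partitions n" and sv: "{x \<in> set_mset p. r \<le> count p x} = {u}"
        by (auto simp: D_set_def)
      have pos: "\<forall>x\<in>#p. 0 < x" "sum_mset p = n" using pp by (auto simp: partitions_def)
      have cu: "r \<le> count p u" using sv by auto
      have cx: "count p x < r" if "x \<noteq> u" for x
      proof (cases "x \<in># p")
        case True then show ?thesis using sv that by (metis (mono_tags, lifting) mem_Collect_eq not_le singletonD)
      next
        case False then show ?thesis using r by (simp add: not_in_iff)
      qed
      define k where "k = count p u div r"
      have k0: "0 < k" unfolding k_def using cu r by (simp add: div_greater_zero_iff)
      have rk: "r*k \<le> count p u" unfolding k_def by (simp add: mult.commute)
      define a where "a = p - replicate_mset (r*k) u"
      have pa: "p = a + replicate_mset (r*k) u"
        unfolding a_def using rk by (simp add: multiset_eq_iff)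
      have ca: "count a x < r" for x
      proof (cases "x = u")
        case True
        then have "count a x = count p u - r * (count p u div r)" unfolding a_def k_def by simp
        also have "\<dots> = count p u mod r" by (simp add: minus_mult_div_eq_mod)
        finally show ?thesis using r by simp
      next
        case False then show ?thesis using cx[OF False] unfolding a_def by simp
      qed
      have apos: "\<forall>x\<in>#a. 0 < x" using pos(1) unfolding a_def by (meson in_diffD)
      have "sum_mset a + u*r*k = n" using pos(2) pa by (simp add: algebra_simps)
      then have "(k, a) \<in> ?S" using apos ca k0 by (auto simp: LessR_def partitions_def)
      then show "p \<in> ?g ` ?S" using pa by force
    qed
  qed
  ultimately have "bij_betw ?g ?S (D_set u r n)" by (rule bij_betw_imageI)
  then have "beta u r n = card ?S" by (simp add: bij_betw_same_card beta_def)
  also have "\<dots> = (\<Sum>k\<in>?K. card (LessR r (n - u*r*k)))"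
    using finite_K[of u r n] u r finite_LessR by (simp add: card_SigmaI)
  finally show ?thesis .
qed

theorem theorem1:
  fixes u r n :: nat
  assumes "1 \<le> u" and "2 \<le> r"
  shows "alpha u r n = beta u r n"
proof -
  have r: "0 < r" using assms(2) by simp
  show ?thesis using alpha_sum[OF assms(1) r] beta_sum[OF assms(1) r] glaisher[OF r] by simp
qed

end
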